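(* Let $H$ be a Hilbert space and $T$ a densely defined closed operator on $H$ with closed range. Then $T$ is selfadjoint if and only if $w(T)$ is selfadjoint.
   Context: For a densely defined closed operator $A$ with closed range, $C(A)=D(A)\cap N(A)^{\perp}$, and the Moore–Penrose inverse $A^{\dagger}$ is defined on $R(A)\oplus^{\perp}R(A)^{\perp}$ by $A^{\dagger}y=(A|_{C(A)})^{-1}y$ for $y\in R(A)$ and $A^{\dagger}y=0$ for $y\in R(A)^{\perp}$. The generalized Cauchy dual is $w(A)=A(A^{*}A)^{\dagger}$ (products on natural domains). *)

theory Defs
  imports "HOL-Analysis.Analysis"
begin

class complex_vector = real_vector +
  fixes scaleC :: "complex \<Rightarrow> 'a \<Rightarrow> 'a" (infixr \<open>*\<^sub>C\<close> 75)
  assumes scaleC_add_right: "a *\<^sub>C (x + y) = a *\<^sub>C x + a *\<^sub>C y"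
    and scaleC_add_left: "(a + b) *\<^sub>C x = a *\<^sub>C x + b *\<^sub>C x"
    and scaleC_scaleC: "a *\<^sub>C (b *\<^sub>C x) = (a * b) *\<^sub>C x"
    and scaleC_one: "1 *\<^sub>C x = x"
    and scaleR_scaleC: "r *\<^sub>R x = complex_of_real r *\<^sub>C x"

class complex_inner = complex_vector + real_normed_vector +
  fixes cinner :: "'a \<Rightarrow> 'a \<Rightarrow> complex"
  assumes cinner_commute: "cinner x y = cnj (cinner y x)"
    and cinner_add_left: "cinner (x + y) z = cinner x z + cinner y z"
    and cinner_scaleC_left: "cinner (c *\<^sub>C x) y = cnj c * cinner x y"
    and cinner_ge_zero: "0 \<le> Re (cinner x x)"
    and cinner_eq_zero_iff: "cinner x x = 0 \<longleftrightarrow> x = 0"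
    and norm_eq_sqrt_cinner: "norm x = sqrt (Re (cinner x x))"

class chilbert_space = complex_inner + complete_space

type_synonym 'a linop = "'a set \<times> ('a \<Rightarrow> 'a)"

definition op_dom :: "'a linop \<Rightarrow> 'a set" where "op_dom T = fst T"
definition op_app :: "'a linop \<Rightarrow> 'a \<Rightarrow> 'a" where "op_app T = snd T"

definition csubspace :: "'a::complex_vector set \<Rightarrow> bool" where
  "csubspace S \<longleftrightarrow> 0 \<in> S \<and> (\<forall>x\<in>S. \<forall>y\<in>S. x + y \<in> S) \<and> (\<forall>c. \<forall>x\<in>S. c *\<^sub>C x \<in> S)"

definition lin_op :: "'a::complex_vector linop \<Rightarrow> bool" where
  "lin_op T \<longleftrightarrow> csubspace (op_dom T)
     \<and> (\<forall>x\<in>op_dom T. \<forall>y\<in>op_dom T. op_app T (x + y) = op_app T x + op_app T y)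
     \<and> (\<forall>c. \<forall>x\<in>op_dom T. op_app T (c *\<^sub>C x) = c *\<^sub>C op_app T x)"

definition densely_defined :: "'a::complex_inner linop \<Rightarrow> bool" where
  "densely_defined T \<longleftrightarrow> closure (op_dom T) = UNIV"

definition graph :: "'a linop \<Rightarrow> ('a \<times> 'a) set" where
  "graph T = {(x, op_app T x) | x. x \<in> op_dom T}"

definition closed_op :: "'a::complex_inner linop \<Rightarrow> bool" where
  "closed_op T \<longleftrightarrow> closed (graph T)"

definition ran :: "'a linop \<Rightarrow> 'a set" where
  "ran T = op_app T ` op_dom T"

definition ker :: "'a::zero linop \<Rightarrow> 'a set" where
  "ker T = {x \<in> op_dom T. op_app T x = 0}"

definition orth :: "'a::complex_inner set \<Rightarrow> 'a set" where
  "orth S = {y. \<forall>x\<in>S. cinner x y = 0}"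

text \<open>Hilbert space adjoint (for densely defined T the defining vector z is unique).\<close>
definition adjoint :: "'a::complex_inner linop \<Rightarrow> 'a linop" where
  "adjoint T = ({y. \<exists>z. \<forall>x\<in>op_dom T. cinner (op_app T x) y = cinner x z},
                \<lambda>y. THE z. \<forall>x\<in>op_dom T. cinner (op_app T x) y = cinner x z)"

definition op_comp :: "'a linop \<Rightarrow> 'a linop \<Rightarrow> 'a linop" where
  "op_comp A B = ({x \<in> op_dom B. op_app B x \<in> op_dom A}, \<lambda>x. op_app A (op_app B x))"

definition carrier_op :: "'a::complex_inner linop \<Rightarrow> 'a set" where
  "carrier_op A = op_dom A \<inter> orth (ker A)"

text \<open>Moore--Penrose inverse: defined on R(A) \<oplus> R(A)^\<bottom>, with
  A\<dagger>(Ax + z) = x for x \<in> C(A), z \<in> R(A)^\<bottom>.\<close>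
definition mp_inv :: "'a::complex_inner linop \<Rightarrow> 'a linop" where
  "mp_inv A = ({y + z | y z. y \<in> ran A \<and> z \<in> orth (ran A)},
               \<lambda>v. THE x. x \<in> carrier_op A \<and> (\<exists>z\<in>orth (ran A). v = op_app A x + z))"

text \<open>Generalized Cauchy dual w(A) = A (A^* A)\<dagger>.\<close>
definition cauchy_dual :: "'a::complex_inner linop \<Rightarrow> 'a linop" where
  "cauchy_dual A = op_comp A (mp_inv (op_comp (adjoint A) A))"

definition selfadjoint :: "'a::complex_inner linop \<Rightarrow> bool" where
  "selfadjoint T \<longleftrightarrow> densely_defined T \<and> op_dom (adjoint T) = op_dom T
      \<and> (\<forall>x\<in>op_dom T. op_app (adjoint T) x = op_app T x)"

end

theory Submission
  imports Defs
begin


lemma cinner_add_right: "cinner x (y + z) = cinner x y + cinner x z"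
  by (metis cinner_add_left cinner_commute complex_cnj_add)
lemma cinner_scaleC_right: "cinner x (c *\<^sub>C y) = c * cinner x y"
  by (metis cinner_commute cinner_scaleC_left complex_cnj_cnj complex_cnj_mult)
lemma scaleC_neg1: "(-1::complex) *\<^sub>C x = - (x::'a::complex_vector)"
  by (metis of_real_1 of_real_minus scaleR_minus1_left scaleR_scaleC)
lemma scaleC_zero_right[simp]: "c *\<^sub>C (0::'a::complex_vector) = 0"
  by (metis add_cancel_right_right add_0 scaleC_add_right)
lemma cinner_zero_left[simp]: "cinner 0 y = 0"
  by (metis add_cancel_right_right add_0 cinner_add_left)
lemma cinner_zero_right[simp]: "cinner y 0 = 0"
  by (metis cinner_commute cinner_zero_left complex_cnj_zero)
lemma cinner_minus_left: "cinner (- x) y = - cinner x y"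
  by (metis cinner_scaleC_left scaleC_neg1 complex_cnj_minus complex_cnj_one mult_minus1)
lemma cinner_minus_right: "cinner y (- x) = - cinner y x"
  by (metis cinner_scaleC_right scaleC_neg1 mult_minus1)
lemma cinner_diff_left: "cinner (x - y) z = cinner x z - cinner y z"
proof -
  have "x - y = x + - y" by simp
  thus ?thesis by (simp only: cinner_add_left cinner_minus_left) simp
qed
lemma cinner_diff_right: "cinner z (x - y) = cinner z x - cinner z y"
proof -
  have "x - y = x + - y" by simp
  thus ?thesis by (simp only: cinner_add_right cinner_minus_right) simp
qed
lemma cinner_scaleR_left: "cinner (r *\<^sub>R x) y = complex_of_real r * cinner x y"
  by (simp add: scaleR_scaleC cinner_scaleC_left)
lemma cinner_scaleR_right: "cinner y (r *\<^sub>R x) = complex_of_real r * cinner y x"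
  by (simp add: scaleR_scaleC cinner_scaleC_right)
lemma norm_sq_cinner: "(norm x)^2 = Re (cinner x x)"
  using norm_eq_sqrt_cinner[of x] cinner_ge_zero[of x] by simp
lemma Re_cinner_sym: "Re (cinner x y) = Re (cinner y x)"
  using cinner_commute[of x y] by simp
lemma cinner_self_zero: "cinner x x = 0 \<Longrightarrow> x = 0"
  using cinner_eq_zero_iff by blast
lemma Re_cinner_self_zero: "Re (cinner x x) = 0 \<Longrightarrow> x = 0"
  using norm_sq_cinner[of x] by simp
lemma orth_sym: "cinner x y = 0 \<longleftrightarrow> cinner y x = 0"
  using cinner_commute[of x y] by auto

lemma norm_diff_sq:
  "(norm (a - t *\<^sub>R w))^2 = (norm a)^2 - 2 * t * Re (cinner w a) + t^2 * (norm w)^2"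
  unfolding norm_sq_cinner
  by (simp add: cinner_diff_left cinner_diff_right cinner_scaleR_left cinner_scaleR_right
        Re_cinner_sym[of a w] power2_eq_square algebra_simps)

lemma parallelogram_a: "(norm ((x::'a::complex_inner) + y))^2 + (norm (x - y))^2 = 2 * (norm x)^2 + 2 * (norm y)^2"
  unfolding norm_sq_cinner
  by (simp add: cinner_diff_left cinner_diff_right cinner_add_left cinner_add_right algebra_simps)

lemma quad_zero:
  fixes \<alpha> \<beta> :: real
  assumes "\<forall>t. 0 \<le> - 2 * t * \<alpha> + t^2 * \<beta>" "\<beta> \<ge> 0"
  shows "\<alpha> = 0"
proof -
  define t where "t = \<alpha> / (\<beta> + 1)"
  have "0 \<le> - 2 * t * \<alpha> + t^2 * \<beta>" using assms by blast
  hence "0 \<le> (\<beta>+1)^2 * (- 2 * t * \<alpha> + t^2 * \<beta>)" using assms(2) by simp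
  also have "\<dots> = \<alpha>^2 * (- \<beta> - 2)"
  proof -
    have "\<alpha> = t * (\<beta> + 1)" unfolding t_def using assms(2) by simp
    thus ?thesis by (simp add: power2_eq_square algebra_simps)
  qed
  finally have "\<alpha>^2 * (\<beta> + 2) \<le> 0" by (simp add: algebra_simps)
  moreover have "\<beta> + 2 > 0" using assms(2) by simp
  ultimately have "\<alpha>^2 \<le> 0" by (simp add: mult_le_0_iff)
  thus ?thesis by simp
qed

lemma closest_point_gen:
  fixes K :: "'b::{real_normed_vector,complete_space} set"
  assumes par: "\<And>x y::'b. (norm (x + y))^2 + (norm (x - y))^2 = 2 * (norm x)^2 + 2 * (norm y)^2"
    and cl: "closed K" and ne: "k0 \<in> K"
    and mid: "\<And>a b. a \<in> K \<Longrightarrow> b \<in> K \<Longrightarrow> (1/2) *\<^sub>R (a + b) \<in> K"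
  shows "\<exists>k\<in>K. \<forall>k'\<in>K. norm (p - k) \<le> norm (p - k')"
proof -
  define d where "d = Inf ((\<lambda>k. norm (p - k)) ` K)"
  have bdd: "bdd_below ((\<lambda>k. norm (p - k)) ` K)" by (intro bdd_belowI[of _ 0]) auto
  have dle: "d \<le> norm (p - k)" if "k \<in> K" for k
    unfolding d_def using bdd that by (intro cInf_lower) auto
  have d0: "0 \<le> d" unfolding d_def using ne by (intro cInf_greatest) auto
  have ex: "\<forall>n. \<exists>k. k \<in> K \<and> (norm (p - k))^2 < d^2 + 1 / (real n + 1)"
  proof
    fix n :: nat
    have "d^2 < d^2 + 1 / (real n + 1)" by simp
    hence "sqrt (d^2) < sqrt (d^2 + 1 / (real n + 1))" by (rule real_sqrt_less_mono)
    hence "d < sqrt (d^2 + 1 / (real n + 1))" using d0 by simp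
    hence "Inf ((\<lambda>k. norm (p - k)) ` K) < sqrt (d^2 + 1 / (real n + 1))" unfolding d_def .
    then obtain y where "y \<in> (\<lambda>k. norm (p - k)) ` K" "y < sqrt (d^2 + 1 / (real n + 1))"
      using cInf_lessD[of "(\<lambda>k. norm (p - k)) ` K"] ne by blast
    then obtain k where "k \<in> K" "norm (p - k) < sqrt (d^2 + 1 / (real n + 1))" by blast
    moreover have "(norm (p - k))^2 < d^2 + 1 / (real n + 1)"
    proof -
      have "(norm (p - k))^2 < (sqrt (d^2 + 1 / (real n + 1)))^2"
        using calculation(2) by (intro power_strict_mono) auto
      thus ?thesis by (simp add: add_nonneg_nonneg)
    qed
    ultimately show "\<exists>k. k \<in> K \<and> (norm (p - k))^2 < d^2 + 1 / (real n + 1)" by blast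
  qed
  obtain ks where ks0: "\<forall>n. ks n \<in> K \<and> (norm (p - ks n))^2 < d^2 + 1 / (real n + 1)"
    using choice[OF ex] by blast
  hence ks: "\<And>n. ks n \<in> K" "\<And>n. (norm (p - ks n))^2 < d^2 + 1 / (real n + 1)" by auto
  have key: "(norm (ks n - ks m))^2 \<le> 2 / (real n + 1) + 2 / (real m + 1)" for n m
  proof -
    have mK: "(1/2) *\<^sub>R (ks n + ks m) \<in> K" using mid ks(1) by blast
    have "d^2 \<le> (norm (p - (1/2) *\<^sub>R (ks n + ks m)))^2"
      using dle[OF mK] d0 by (simp add: power_mono)
    moreover have "(norm ((p - ks n) + (p - ks m)))^2 = 4 * (norm (p - (1/2) *\<^sub>R (ks n + ks m)))^2"
    proof -
      have "(p - ks n) + (p - ks m) = 2 *\<^sub>R (p - (1/2) *\<^sub>R (ks n + ks m))"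
        by (simp add: algebra_simps scaleR_2)
      thus ?thesis by (simp add: power_mult_distrib)
    qed
    moreover have "(p - ks n) - (p - ks m) = - (ks n - ks m)" by simp
    moreover note par[of "p - ks n" "p - ks m"] ks(2)[of n] ks(2)[of m]
    ultimately show ?thesis by (simp only: norm_minus_cancel; linarith)
  qed
  have "Cauchy ks"
  proof (rule metric_CauchyI)
    fix e :: real assume e: "0 < e"
    obtain N :: nat where N: "4 / e^2 < real N" using reals_Archimedean2 by blast
    have "dist (ks m) (ks n) < e" if "m \<ge> N" "n \<ge> N" for m n
    proof -
      have "2 / (real n + 1) \<le> 2 / (real N + 1)" "2 / (real m + 1) \<le> 2 / (real N + 1)"
        using that by (auto intro!: divide_left_mono)
      moreover have "4 / (real N + 1) < e^2"
        using N e by (simp add: field_simps) (smt (verit) zero_less_power)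
      ultimately have "(norm (ks m - ks n))^2 < e^2" using key[of m n] by linarith
      hence "norm (ks m - ks n) < e" using e
        by (metis abs_of_pos abs_norm_cancel power2_less_imp_less less_imp_le)
      thus ?thesis by (simp add: dist_norm)
    qed
    thus "\<exists>M. \<forall>m\<ge>M. \<forall>n\<ge>M. dist (ks m) (ks n) < e" by blast
  qed
  then obtain k where lim: "ks \<longlonglongrightarrow> k" using complete_UNIV convergent_eq_Cauchy by blast
  have kK: "k \<in> K" using cl ks(1) lim closed_sequentially by blast
  have lim2: "(\<lambda>n. (norm (p - ks n))^2) \<longlonglongrightarrow> (norm (p - k))^2"
    by (intro tendsto_intros lim)
  have lim3: "(\<lambda>n. d^2 + 1 / (real n + 1)) \<longlonglongrightarrow> d^2 + 0"
  proof -
    have "(\<lambda>n. 1 / (real n + 1)) \<longlonglongrightarrow> 0"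
      using LIMSEQ_inverse_real_of_nat by (simp add: inverse_eq_divide add.commute)
    thus ?thesis by (intro tendsto_intros)
  qed
  have "(norm (p - k))^2 \<le> d^2"
    using LIMSEQ_le[OF lim2 lim3] ks(2) less_imp_le by auto
  hence nd: "norm (p - k) \<le> d" by (rule power2_le_imp_le[OF _ d0])
  show ?thesis
  proof (intro bexI[OF _ kK] ballI)
    fix k' assume "k' \<in> K"
    show "norm (p - k) \<le> norm (p - k')" using nd dle[OF \<open>k' \<in> K\<close>] by linarith
  qed
qed



lemma proj_thm:
  fixes K :: "'a::chilbert_space set"
  assumes cl: "closed K" and sub: "csubspace K"
  shows "\<exists>k\<in>K. x - k \<in> orth K"
proof -
  have z: "0 \<in> K" and ad: "\<And>a b. a \<in> K \<Longrightarrow> b \<in> K \<Longrightarrow> a + b \<in> K"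
    and sc: "\<And>c a. a \<in> K \<Longrightarrow> c *\<^sub>C a \<in> K" using sub unfolding csubspace_def by auto
  have scR: "\<And>r a. a \<in> K \<Longrightarrow> r *\<^sub>R a \<in> K" by (simp add: scaleR_scaleC sc)
  have mid: "\<And>a b. a \<in> K \<Longrightarrow> b \<in> K \<Longrightarrow> (1/2) *\<^sub>R (a + b) \<in> K"
    using ad scR by blast
  obtain k where kK: "k \<in> K" and kmin: "\<forall>k'\<in>K. norm (x - k) \<le> norm (x - k')"
    using closest_point_gen[OF parallelogram_a cl z mid, of x] by blast
  have re: "Re (cinner w (x - k)) = 0" if "w \<in> K" for w
  proof (rule quad_zero)
    show "\<forall>t. 0 \<le> - 2 * t * Re (cinner w (x - k)) + t^2 * (norm w)^2"
    proof
      fix t :: real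
      have "k + t *\<^sub>R w \<in> K" using ad scR kK that by blast
      hence "norm (x - k) \<le> norm (x - (k + t *\<^sub>R w))" using kmin by blast
      also have "x - (k + t *\<^sub>R w) = (x - k) - t *\<^sub>R w" by simp
      finally have "norm (x - k) \<le> norm ((x - k) - t *\<^sub>R w)" .
      hence "(norm (x - k))^2 \<le> (norm ((x - k) - t *\<^sub>R w))^2" by (simp add: power_mono)
      thus "0 \<le> - 2 * t * Re (cinner w (x - k)) + t^2 * (norm w)^2"
        unfolding norm_diff_sq by linarith
    qed
  qed simp
  have "cinner w (x - k) = 0" if "w \<in> K" for w
  proof -
    have "Re (cinner (\<i> *\<^sub>C w) (x - k)) = 0" using re sc that by blast
    hence "Im (cinner w (x - k)) = 0" by (simp add: cinner_scaleC_left)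
    moreover have "Re (cinner w (x - k)) = 0" using re that by blast
    ultimately show ?thesis by (simp add: complex_eq_iff)
  qed
  thus ?thesis using kK unfolding orth_def by blast
qed

lemma orth_add: "a \<in> orth S \<Longrightarrow> b \<in> orth S \<Longrightarrow> a + b \<in> orth S"
  unfolding orth_def by (simp add: cinner_add_right)
lemma orth_diff: "a \<in> orth S \<Longrightarrow> b \<in> orth S \<Longrightarrow> a - b \<in> orth S"
  unfolding orth_def by (simp add: cinner_diff_right)
lemma orth_self: "a \<in> S \<Longrightarrow> a \<in> orth S \<Longrightarrow> a = 0"
  unfolding orth_def using cinner_self_zero by blast
lemma orthD: "a \<in> orth S \<Longrightarrow> s \<in> S \<Longrightarrow> cinner s a = 0"
  unfolding orth_def by blast
lemma orthD': "a \<in> orth S \<Longrightarrow> s \<in> S \<Longrightarrow> cinner a s = 0"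
  unfolding orth_def using orth_sym by blast

lemma Re_cinner_polar: "Re (cinner x z) = ((norm (x + z))^2 - (norm (x - z))^2) / 4"
  unfolding norm_sq_cinner
  by (simp add: cinner_diff_left cinner_diff_right cinner_add_left cinner_add_right Re_cinner_sym[of z x])

lemma dense_zero:
  assumes "densely_defined B" "\<forall>x\<in>op_dom B. cinner x z = 0"
  shows "z = 0"
proof -
  let ?C = "{x. ((norm (x + z))^2 - (norm (x - z))^2) / 4 = 0}"
  have "closed ?C" by (intro closed_Collect_eq continuous_intros) auto
  moreover have "op_dom B \<subseteq> ?C"
  proof
    fix x assume "x \<in> op_dom B"
    hence "Re (cinner x z) = 0" using assms(2) by simp
    thus "x \<in> ?C" using Re_cinner_polar[of x z] by simp
  qed
  ultimately have "closure (op_dom B) \<subseteq> ?C" by (simp add: closure_minimal)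
  hence "z \<in> ?C" using assms(1) unfolding densely_defined_def by blast
  hence "z + z = 0" by simp
  thus ?thesis by (metis scaleR_2 scaleR_eq_0_iff zero_neq_numeral)
qed

lemma adj_unique:
  assumes "densely_defined B" "\<forall>x\<in>op_dom B. cinner (op_app B x) y = cinner x z1"
    "\<forall>x\<in>op_dom B. cinner (op_app B x) y = cinner x z2"
  shows "z1 = z2"
proof -
  have "\<forall>x\<in>op_dom B. cinner x (z1 - z2) = 0" using assms(2,3) by (simp add: cinner_diff_right)
  hence "z1 - z2 = 0" using dense_zero[OF assms(1)] by blast
  thus ?thesis by simp
qed

lemma adj_intro:
  assumes "densely_defined B" "\<forall>x\<in>op_dom B. cinner (op_app B x) y = cinner x z"
  shows "y \<in> op_dom (adjoint B) \<and> op_app (adjoint B) y = z"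
proof
  show "y \<in> op_dom (adjoint B)" using assms(2) unfolding adjoint_def op_dom_def by auto
  show "op_app (adjoint B) y = z" unfolding adjoint_def op_app_def snd_conv
    apply (rule the_equality)
    using assms(2) apply (simp add: op_app_def op_dom_def)
    using adj_unique[OF assms(1)] assms(2) by (simp add: op_app_def op_dom_def)
qed

lemma adj_char:
  assumes "densely_defined B" "y \<in> op_dom (adjoint B)" "x \<in> op_dom B"
  shows "cinner (op_app B x) y = cinner x (op_app (adjoint B) y)"
proof -
  obtain z where z: "\<forall>x\<in>op_dom B. cinner (op_app B x) y = cinner x z"
    using assms(2) unfolding adjoint_def op_dom_def by auto
  thus ?thesis using adj_intro[OF assms(1) z] assms(3) by simp
qed

lemma op_comp_simps[simp]:
  "op_dom (op_comp A B) = {x \<in> op_dom B. op_app B x \<in> op_dom A}"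
  "op_app (op_comp A B) x = op_app A (op_app B x)"
  unfolding op_comp_def op_dom_def op_app_def by auto



locale cop =
  fixes T :: "'a::chilbert_space linop"
  assumes lin: "lin_op T" and dd: "densely_defined T" and co: "closed_op T"
    and cr: "closed (ran T)"
begin

abbreviation "D \<equiv> op_dom T"
abbreviation "Tp \<equiv> op_app T"
abbreviation "A \<equiv> adjoint T"
abbreviation "DA \<equiv> op_dom (adjoint T)"
abbreviation "Ap \<equiv> op_app (adjoint T)"

lemma D_zero: "0 \<in> D" and D_add: "x \<in> D \<Longrightarrow> y \<in> D \<Longrightarrow> x + y \<in> D"
  and D_sc: "x \<in> D \<Longrightarrow> c *\<^sub>C x \<in> D"
  and T_add: "x \<in> D \<Longrightarrow> y \<in> D \<Longrightarrow> Tp (x + y) = Tp x + Tp y"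
  and T_sc: "x \<in> D \<Longrightarrow> Tp (c *\<^sub>C x) = c *\<^sub>C Tp x"
  using lin unfolding lin_op_def csubspace_def by auto

lemma D_neg: "x \<in> D \<Longrightarrow> - x \<in> D" and T_neg: "x \<in> D \<Longrightarrow> Tp (- x) = - Tp x"
  using D_sc[of x "-1"] T_sc[of x "-1"] by (simp_all add: scaleC_neg1)

lemma D_diff: "x \<in> D \<Longrightarrow> y \<in> D \<Longrightarrow> x - y \<in> D"
  and T_diff: "x \<in> D \<Longrightarrow> y \<in> D \<Longrightarrow> Tp (x - y) = Tp x - Tp y"
  using D_add[of x "-y"] T_add[of x "-y"] D_neg[of y] T_neg[of y] by simp_all

lemma T_zero: "Tp 0 = 0"
  using T_add[OF D_zero D_zero] by simp

lemma D_scR: "x \<in> D \<Longrightarrow> r *\<^sub>R x \<in> D" and T_scR: "x \<in> D \<Longrightarrow> Tp (r *\<^sub>R x) = r *\<^sub>R Tp x"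
  by (simp_all add: scaleR_scaleC D_sc T_sc)

lemma A_intro: "\<forall>x\<in>D. cinner (Tp x) y = cinner x z \<Longrightarrow> y \<in> DA \<and> Ap y = z"
  using adj_intro[OF dd] by blast
lemma A_char: "y \<in> DA \<Longrightarrow> x \<in> D \<Longrightarrow> cinner (Tp x) y = cinner x (Ap y)"
  using adj_char[OF dd] by blast

lemma A_diff: assumes "y1 \<in> DA" "y2 \<in> DA" shows "y1 - y2 \<in> DA \<and> Ap (y1 - y2) = Ap y1 - Ap y2"
  using assms by (intro A_intro) (simp add: cinner_diff_right A_char)
lemma A_add: assumes "y1 \<in> DA" "y2 \<in> DA" shows "y1 + y2 \<in> DA \<and> Ap (y1 + y2) = Ap y1 + Ap y2"
  using assms by (intro A_intro) (simp add: cinner_add_right A_char)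
lemma A_neg: assumes "y \<in> DA" shows "- y \<in> DA \<and> Ap (- y) = - Ap y"
  using assms by (intro A_intro) (simp add: cinner_minus_right A_char)
lemma A_zero: "0 \<in> DA \<and> Ap 0 = 0"
  by (intro A_intro) simp

lemma ran_sub: "csubspace (ran T)"
  unfolding csubspace_def ran_def
proof (intro conjI ballI allI)
  show "0 \<in> Tp ` D" using D_zero T_zero by force
next
  fix x y assume "x \<in> Tp ` D" "y \<in> Tp ` D"
  then obtain a b where "a \<in> D" "b \<in> D" "x = Tp a" "y = Tp b" by blast
  thus "x + y \<in> Tp ` D" using D_add T_add by (metis image_eqI)
next
  fix c x assume "x \<in> Tp ` D"
  then obtain a where "a \<in> D" "x = Tp a" by blast
  thus "c *\<^sub>C x \<in> Tp ` D" using D_sc T_sc by (metis image_eqI)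
qed

lemma ker_closed: "closed (ker T)"
proof -
  have "ker T = (\<lambda>x. (x, 0)) -` graph T"
    unfolding ker_def graph_def by auto
  moreover have "closed ((\<lambda>x. (x, 0::'a)) -` graph T)"
    using co unfolding closed_op_def by (intro continuous_closed_vimage continuous_intros)
  ultimately show ?thesis by simp
qed

lemma ker_sub: "csubspace (ker T)"
  unfolding csubspace_def ker_def using D_zero T_zero D_add T_add D_sc T_sc by auto

lemma proj_R: "\<exists>x\<in>D. u - Tp x \<in> orth (ran T)"
  using proj_thm[OF cr ran_sub, of u] unfolding ran_def by blast

lemma proj_N: "\<exists>n\<in>ker T. x - n \<in> orth (ker T)"
  using proj_thm[OF ker_closed ker_sub] by blast

lemma orthR_kerA: "orth (ran T) = ker A"
proof
  show "orth (ran T) \<subseteq> ker A"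
  proof
    fix y assume "y \<in> orth (ran T)"
    hence "\<forall>x\<in>D. cinner (Tp x) y = cinner x 0" unfolding orth_def ran_def by auto
    thus "y \<in> ker A" using A_intro unfolding ker_def by blast
  qed
  show "ker A \<subseteq> orth (ran T)"
    unfolding ker_def orth_def ran_def using A_char by auto
qed

lemma norm_pair_sq: "(norm (a, b))^2 = (norm a)^2 + (norm b)^2"
  unfolding norm_Pair by simp

lemma par_prod: "(norm ((x::'a \<times> 'a) + y))^2 + (norm (x - y))^2 = 2 * (norm x)^2 + 2 * (norm y)^2"
proof -
  obtain x1 x2 y1 y2 where "x = (x1, x2)" "y = (y1, y2)" by (cases x, cases y) auto
  thus ?thesis using parallelogram_a[of x1 y1] parallelogram_a[of x2 y2]
    by (simp add: norm_pair_sq)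
qed

lemma graph_lemma: assumes "x \<in> orth (ran A)" shows "x \<in> ker T"
proof -
  have mid: "(1/2) *\<^sub>R (a + b) \<in> graph T" if ab: "a \<in> graph T" "b \<in> graph T" for a b
  proof -
    obtain u v where "u \<in> D" "v \<in> D" "a = (u, Tp u)" "b = (v, Tp v)"
      using ab unfolding graph_def by auto
    thus ?thesis unfolding graph_def
      using D_add D_scR T_add T_scR by (auto intro!: exI[of _ "(1/2) *\<^sub>R (u + v)"])
  qed
  have g0: "(0, 0) \<in> graph T" unfolding graph_def using D_zero T_zero by force
  obtain g where gG: "g \<in> graph T" and gmin: "\<forall>k'\<in>graph T. norm ((x, 0) - g) \<le> norm ((x, 0) - k')"
    using closest_point_gen[OF par_prod _ g0 mid, of "(x, 0)"] co unfolding closed_op_def by blast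
  obtain u where uD: "u \<in> D" and g: "g = (u, Tp u)" using gG unfolding graph_def by blast
  define a where "a = x - u"
  define b where "b = - Tp u"
  have re: "Re (cinner w a) + Re (cinner (Tp w) b) = 0" if "w \<in> D" for w
  proof -
    have "Re (cinner w a) + Re (cinner (Tp w) b) = 0"
    proof (rule quad_zero)
      show "\<forall>t. 0 \<le> - 2 * t * (Re (cinner w a) + Re (cinner (Tp w) b)) + t^2 * ((norm w)^2 + (norm (Tp w))^2)"
      proof
        fix t :: real
        have "(u + t *\<^sub>R w, Tp (u + t *\<^sub>R w)) \<in> graph T"
          unfolding graph_def using D_add D_scR uD that by blast
        hence "norm ((x, 0) - g) \<le> norm ((x, 0) - (u + t *\<^sub>R w, Tp (u + t *\<^sub>R w)))" using gmin by blast
        also have "(x, 0) - (u + t *\<^sub>R w, Tp (u + t *\<^sub>R w)) = (a - t *\<^sub>R w, b - t *\<^sub>R Tp w)"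
          unfolding a_def b_def using T_add T_scR D_scR uD that by (simp add: algebra_simps)
        finally have "(norm ((x, 0) - g))^2 \<le> (norm (a - t *\<^sub>R w, b - t *\<^sub>R Tp w))^2"
          by (simp add: power_mono)
        moreover have "(x, 0) - g = (a, b)" unfolding g a_def b_def by simp
        ultimately have "(norm (a, b))^2 \<le> (norm (a - t *\<^sub>R w, b - t *\<^sub>R Tp w))^2" by simp
        hence "(norm a)^2 + (norm b)^2 \<le> (norm (a - t *\<^sub>R w))^2 + (norm (b - t *\<^sub>R Tp w))^2"
          unfolding norm_pair_sq .
        thus "0 \<le> - 2 * t * (Re (cinner w a) + Re (cinner (Tp w) b)) + t^2 * ((norm w)^2 + (norm (Tp w))^2)"
          unfolding norm_diff_sq by (simp add: algebra_simps)
      qed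
    qed simp
    thus ?thesis .
  qed
  have s0: "cinner w a + cinner (Tp w) b = 0" if "w \<in> D" for w
  proof -
    have "Re (cinner (\<i> *\<^sub>C w) a) + Re (cinner (Tp (\<i> *\<^sub>C w)) b) = 0" using re D_sc that by blast
    hence "Im (cinner w a) + Im (cinner (Tp w) b) = 0" using T_sc that by (simp add: cinner_scaleC_left)
    moreover have "Re (cinner w a) + Re (cinner (Tp w) b) = 0" using re that by blast
    ultimately show ?thesis by (simp add: complex_eq_iff)
  qed
  have "\<forall>w\<in>D. cinner (Tp w) b = cinner w (- a)"
    using s0 by (simp add: cinner_minus_right eq_neg_iff_add_eq_0 add.commute)
  hence bA: "b \<in> DA" "Ap b = - a" using A_intro by blast+
  have TuA: "Tp u \<in> DA" "Ap (Tp u) = a" using A_neg[OF bA(1)] bA(2) unfolding b_def by simp_all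
  have "cinner (Ap (Tp u)) x = 0" using assms TuA(1) unfolding orth_def ran_def by blast
  moreover have "x = u + a" unfolding a_def by simp
  ultimately have "cinner a u + cinner a a = 0" using TuA(2) cinner_add_right[of a u a] by simp
  moreover have "cinner a u = cnj (cinner (Tp u) (Tp u))"
    using A_char[OF TuA(1) uD] TuA(2) cinner_commute[of a u] by simp
  ultimately have "Re (cinner a u + cinner a a) = 0" "Re (cinner a u) = Re (cinner (Tp u) (Tp u))"
    by simp_all
  hence "Re (cinner (Tp u) (Tp u)) + Re (cinner a a) = 0" by simp
  moreover have "Re (cinner (Tp u) (Tp u)) \<ge> 0" "Re (cinner a a) \<ge> 0" by (rule cinner_ge_zero)+
  ultimately have "Re (cinner (Tp u) (Tp u)) = 0" "Re (cinner a a) = 0" by linarith+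
  hence "Tp u = 0" "a = 0" using Re_cinner_self_zero by blast+
  hence "x = u" unfolding a_def by simp
  thus ?thesis using uD \<open>Tp u = 0\<close> unfolding ker_def by simp
qed

lemma orth_ranA: "orth (ran A) = ker T"
proof
  show "orth (ran A) \<subseteq> ker T" using graph_lemma by blast
  show "ker T \<subseteq> orth (ran A)"
  proof
    fix n assume n: "n \<in> ker T"
    have "cinner (Ap y) n = 0" if "y \<in> DA" for y
      using A_char[OF that, of n] n cinner_commute[of "Ap y" n] unfolding ker_def by simp
    thus "n \<in> orth (ran A)" unfolding orth_def ran_def by blast
  qed
qed

end


context cop begin

abbreviation "S \<equiv> op_comp (adjoint T) T"
abbreviation "MP \<equiv> mp_inv (op_comp (adjoint T) T)"
abbreviation "W \<equiv> cauchy_dual T"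

lemma mp_dom: "op_dom (mp_inv B) = {y + z | y z. y \<in> ran B \<and> z \<in> orth (ran B)}"
  by (simp add: mp_inv_def op_dom_def)

lemma domS: "x \<in> op_dom S \<longleftrightarrow> x \<in> D \<and> Tp x \<in> DA" by simp
lemma appS: "op_app S x = Ap (Tp x)" by simp

lemma kerS: "ker S = ker T"
proof
  show "ker S \<subseteq> ker T"
  proof
    fix x assume "x \<in> ker S"
    hence x: "x \<in> D" "Tp x \<in> DA" "Ap (Tp x) = 0" unfolding ker_def by auto
    have "cinner (Tp x) (Tp x) = 0" using A_char[OF x(2) x(1)] x(3) by simp
    hence "Tp x = 0" by (rule cinner_self_zero)
    thus "x \<in> ker T" using x unfolding ker_def by simp
  qed
  show "ker T \<subseteq> ker S" unfolding ker_def using A_zero by auto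
qed

lemma ranS: "ran S = ran A"
proof
  show "ran S \<subseteq> ran A" unfolding ran_def by auto
  show "ran A \<subseteq> ran S"
  proof
    fix m assume "m \<in> ran A"
    then obtain y where y: "y \<in> DA" "m = Ap y" unfolding ran_def by auto
    obtain x where x: "x \<in> D" "y - Tp x \<in> orth (ran T)" using proj_R by blast
    hence r: "y - Tp x \<in> DA" "Ap (y - Tp x) = 0" using orthR_kerA unfolding ker_def by auto
    have "y - (y - Tp x) \<in> DA \<and> Ap (y - (y - Tp x)) = Ap y - Ap (y - Tp x)"
      by (rule A_diff[OF y(1) r(1)])
    hence "Tp x \<in> DA" "Ap (Tp x) = Ap y" using r(2) by simp_all
    thus "m \<in> ran S" using x(1) y(2) unfolding ran_def by force
  qed
qed

lemma orthS: "orth (ran S) = ker T" using ranS orth_ranA by simp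

lemma S_diff: assumes "x1 \<in> op_dom S" "x2 \<in> op_dom S"
  shows "x1 - x2 \<in> op_dom S \<and> op_app S (x1 - x2) = op_app S x1 - op_app S x2"
proof -
  have "Tp (x1 - x2) = Tp x1 - Tp x2" using assms T_diff by simp
  thus ?thesis using assms D_diff A_diff by simp
qed

lemma mp_unique:
  assumes "x1 \<in> carrier_op S" "x2 \<in> carrier_op S" "z1 \<in> orth (ran S)" "z2 \<in> orth (ran S)"
    "op_app S x1 + z1 = op_app S x2 + z2"
  shows "x1 = x2"
proof -
  have d: "x1 \<in> op_dom S" "x2 \<in> op_dom S" using assms(1,2) unfolding carrier_op_def by auto
  have "op_app S x1 = op_app S x2 + z2 - z1" using assms(5) by (metis add_diff_cancel_right')
  hence e: "op_app S (x1 - x2) = z2 - z1" using S_diff[OF d] by simp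
  have "op_app S (x1 - x2) \<in> ran S" using S_diff[OF d] unfolding ran_def by blast
  moreover have "op_app S (x1 - x2) \<in> orth (ran S)" using e orth_diff assms(3,4) by simp
  ultimately have "op_app S (x1 - x2) = 0" by (rule orth_self)
  hence "x1 - x2 \<in> ker S" using S_diff[OF d] unfolding ker_def by simp
  moreover have "x1 - x2 \<in> orth (ker S)" using assms(1,2) orth_diff unfolding carrier_op_def by blast
  ultimately show ?thesis using orth_self by fastforce
qed

lemma mp_exists:
  assumes "x \<in> op_dom S"
  shows "\<exists>c\<in>carrier_op S. op_app S c = op_app S x \<and> Tp c = Tp x"
proof -
  obtain n where n: "n \<in> ker T" "x - n \<in> orth (ker T)" using proj_N by blast
  have xD: "x \<in> D" "Tp x \<in> DA" using assms by auto
  have nD: "n \<in> D" "Tp n = 0" using n unfolding ker_def by auto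
  have T': "Tp (x - n) = Tp x" using T_diff[OF xD(1) nD(1)] nD(2) by simp
  have "x - n \<in> op_dom S" using D_diff[OF xD(1) nD(1)] T' xD by simp
  moreover have "x - n \<in> orth (ker S)" using n kerS by simp
  ultimately show ?thesis using T' unfolding carrier_op_def by (intro bexI[of _ "x - n"]) auto
qed

lemma mp_app:
  assumes "v \<in> op_dom MP"
  shows "op_app MP v \<in> carrier_op S \<and> (\<exists>z\<in>orth (ran S). v = op_app S (op_app MP v) + z)"
proof -
  let ?P = "\<lambda>x. x \<in> carrier_op S \<and> (\<exists>z\<in>orth (ran S). v = op_app S x + z)"
  obtain y z where yz: "y \<in> ran S" "z \<in> orth (ran S)" "v = y + z"
    using assms unfolding mp_inv_def op_dom_def by auto
  obtain x where x: "x \<in> op_dom S" "y = op_app S x" using yz(1) unfolding ran_def by auto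
  obtain c where c: "c \<in> carrier_op S" "op_app S c = op_app S x" using mp_exists[OF x(1)] by blast
  have ex: "?P c" using c yz x by auto
  have "\<exists>!x. ?P x"
  proof (rule ex1I[of _ c])
    show "?P c" by (rule ex)
    fix x' assume "?P x'"
    then obtain z' where "x' \<in> carrier_op S" "z' \<in> orth (ran S)" "v = op_app S x' + z'" by blast
    thus "x' = c" using mp_unique[of x' c z' z] c yz x by simp
  qed
  hence "?P (THE x. ?P x)" by (rule theI')
  moreover have "op_app MP v = (THE x. ?P x)" unfolding mp_inv_def op_app_def by simp
  ultimately show ?thesis by simp
qed

lemma W_dom: "op_dom W = op_dom MP"
  unfolding cauchy_dual_def using mp_app unfolding carrier_op_def by auto

lemma W_app: "op_app W v = Tp (op_app MP v)"
  unfolding cauchy_dual_def by simp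

lemma W_char:
  assumes "v \<in> op_dom W"
  shows "\<exists>x z. x \<in> op_dom S \<and> z \<in> orth (ran S) \<and> v = op_app S x + z \<and> op_app W v = Tp x"
  using mp_app[of v] assms W_dom W_app unfolding carrier_op_def by auto

lemma W_eval:
  assumes "x \<in> op_dom S" "z \<in> orth (ran S)"
  shows "op_app S x + z \<in> op_dom W \<and> op_app W (op_app S x + z) = Tp x"
proof -
  let ?v = "op_app S x + z"
  have "op_app S x \<in> ran S" using assms(1) unfolding ran_def by blast
  hence v: "?v \<in> op_dom MP" unfolding mp_dom using assms by blast
  obtain z' where z': "z' \<in> orth (ran S)" "?v = op_app S (op_app MP ?v) + z'"
    and c: "op_app MP ?v \<in> carrier_op S" using mp_app[OF v] by blast
  obtain c' where c': "c' \<in> carrier_op S" "op_app S c' = op_app S x" "Tp c' = Tp x"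
    using mp_exists[OF assms(1)] by blast
  have "c' = op_app MP ?v" using mp_unique[OF c'(1) c assms(2) z'(1)] c'(2) z'(2) by simp
  thus ?thesis using v W_dom W_app c'(3) by simp
qed

end


context cop begin

lemma fwd:
  assumes sa: "selfadjoint T"
  shows "selfadjoint W"
proof -
  have dA: "DA = D" and aT: "\<And>x. x \<in> D \<Longrightarrow> Ap x = Tp x" using sa unfolding selfadjoint_def by auto
  have "Ap ` D = Tp ` D" by (rule image_cong) (simp_all add: aT)
  hence ranA: "ran A = ran T" unfolding ran_def dA .
  have rS: "ran S = ran T" using ranS ranA by simp
  have all: "v \<in> op_dom W" for v
  proof -
    obtain x where x: "x \<in> D" "v - Tp x \<in> orth (ran T)" using proj_R by blast
    have "Tp x \<in> ran S" using rS x(1) unfolding ran_def by blast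
    then obtain x' where x': "x' \<in> op_dom S" "Tp x = op_app S x'" unfolding ran_def by blast
    have "v = op_app S x' + (v - Tp x)" using x' by simp
    thus ?thesis using W_eval[OF x'(1), of "v - Tp x"] x(2) rS by simp
  qed
  have sym: "cinner (op_app W a) b = cinner a (op_app W b)" for a b
  proof -
    obtain x z where xz: "x \<in> op_dom S" "z \<in> orth (ran S)" "a = op_app S x + z" "op_app W a = Tp x"
      using W_char[OF all] by blast
    obtain x' z' where xz': "x' \<in> op_dom S" "z' \<in> orth (ran S)" "b = op_app S x' + z'" "op_app W b = Tp x'"
      using W_char[OF all] by blast
    have xD: "x \<in> D" "Tp x \<in> D" "x' \<in> D" "Tp x' \<in> D" using xz(1) xz'(1) dA by auto
    have TR: "Tp x \<in> ran T" "Tp x' \<in> ran T" using xD unfolding ran_def by auto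
    have o1: "cinner (Tp x) z' = 0" using orthD[OF _ TR(1)] xz'(2) rS by simp
    have o2: "cinner z (Tp x') = 0" using orthD'[OF _ TR(2)] xz(2) rS by simp
    have "cinner (Tp (Tp x')) (Tp x) = cinner (Tp x') (Ap (Tp x))"
      using A_char[of "Tp x" "Tp x'"] xD dA by simp
    hence "cinner (Tp x) (Tp (Tp x')) = cinner (Ap (Tp x)) (Tp x')"
      using cinner_commute[of "Tp x" "Tp (Tp x')"] cinner_commute[of "Ap (Tp x)" "Tp x'"] by simp
    hence key: "cinner (Tp x) (op_app S x') = cinner (op_app S x) (Tp x')"
      using aT xD by simp
    show ?thesis using xz xz' o1 o2 key by (simp add: cinner_add_left cinner_add_right)
  qed
  have dW: "op_dom W = UNIV" using all by blast
  hence ddW: "densely_defined W" unfolding densely_defined_def by simp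
  have adj: "y \<in> op_dom (adjoint W) \<and> op_app (adjoint W) y = op_app W y" for y
    using adj_intro[OF ddW] sym by blast
  show ?thesis unfolding selfadjoint_def using ddW adj all by auto
qed

end


context cop begin

lemma ker_diff: "a \<in> ker T \<Longrightarrow> b \<in> ker T \<Longrightarrow> a - b \<in> ker T"
  unfolding ker_def using D_diff T_diff by auto

lemma bwd:
  assumes sa: "selfadjoint W"
  shows "selfadjoint T"
proof -
  have ddW: "densely_defined W" and dAW: "op_dom (adjoint W) = op_dom W"
    and aW: "\<And>x. x \<in> op_dom W \<Longrightarrow> op_app (adjoint W) x = op_app W x"
    using sa unfolding selfadjoint_def by auto
  have WR: "op_app W a \<in> ran T" if aw: "a \<in> op_dom W" for a
  proof -
    obtain x z where "x \<in> op_dom S" "op_app W a = Tp x" using W_char[OF aw] by blast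
    thus ?thesis unfolding ran_def by auto
  qed
  have i: "cinner (op_app W a) v = 0" if "a \<in> op_dom W" "v \<in> orth (ran T)" for a v
    using orthD[OF that(2) WR[OF that(1)]] .
  have ii: "cinner (op_app W a) (Tp x) = cinner a (x - n)"
    if aw: "a \<in> op_dom W" "x \<in> D" "n \<in> ker T" "x - n \<in> orth (ker T)" for a x n
  proof -
    obtain x' z' where xz: "x' \<in> op_dom S" "z' \<in> orth (ran S)" "a = op_app S x' + z'"
        "op_app W a = Tp x'" using W_char[OF aw(1)] by blast
    have x'D: "x' \<in> D" "Tp x' \<in> DA" using xz(1) by auto
    have "cinner (Tp x) (Tp x') = cinner x (Ap (Tp x'))" using A_char[OF x'D(2) that(2)] .
    hence 1: "cinner (Tp x') (Tp x) = cinner (op_app S x') x"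
      using cinner_commute[of "Tp x'" "Tp x"] cinner_commute[of x "Ap (Tp x')"] by simp
    have 2: "cinner z' (x - n) = 0" using orthD[OF that(4)] xz(2) orthS by simp
    have SR: "op_app S x' \<in> ran S" using xz(1) unfolding ran_def by blast
    have 3: "cinner (op_app S x') n = 0" using orthD[OF _ SR, of n] that(3) orthS by simp
    show ?thesis using xz(3,4) 1 2 3 by (simp add: cinner_add_left cinner_diff_right)
  qed
  have allW: "y \<in> op_dom W" for y
  proof -
    obtain x where x: "x \<in> D" "y - Tp x \<in> orth (ran T)" using proj_R by blast
    obtain n where n: "n \<in> ker T" "x - n \<in> orth (ker T)" using proj_N by blast
    have "cinner (op_app W a) y = cinner a (x - n)" if "a \<in> op_dom W" for a
    proof -
      have "y = Tp x + (y - Tp x)" by simp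
      hence "cinner (op_app W a) y = cinner (op_app W a) (Tp x) + cinner (op_app W a) (y - Tp x)"
        by (metis cinner_add_right)
      thus ?thesis using i[OF that x(2)] ii[OF that x(1) n] by simp
    qed
    hence "y \<in> op_dom (adjoint W)" using adj_intro[OF ddW] by blast
    thus ?thesis using dAW by simp
  qed
  have iv: "op_app W v = 0" if "v \<in> orth (ran T)" for v
  proof -
    have "\<forall>a\<in>op_dom W. cinner (op_app W a) v = cinner a 0" using i that by simp
    hence "op_app (adjoint W) v = 0" using adj_intro[OF ddW] by blast
    thus ?thesis using aW allW by simp
  qed
  have v: "op_app W (Tp x) = x - n" if "x \<in> D" "n \<in> ker T" "x - n \<in> orth (ker T)" for x n
  proof -
    have "\<forall>a\<in>op_dom W. cinner (op_app W a) (Tp x) = cinner a (x - n)" using ii that by blast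
    hence "op_app (adjoint W) (Tp x) = x - n" using adj_intro[OF ddW] by blast
    thus ?thesis using aW allW by simp
  qed
  have sym: "cinner (op_app W a) b = cinner a (op_app W b)" for a b
    using adj_char[OF ddW, of b a] allW dAW aW by simp
  have vii: "v \<in> ker T" if "v \<in> orth (ran T)" for v
  proof -
    obtain x z where xz: "x \<in> op_dom S" "z \<in> orth (ran S)" "v = op_app S x + z" "op_app W v = Tp x"
      using W_char[OF allW] by blast
    have "Tp x = 0" using xz(4) iv[OF that] by simp
    hence "x \<in> ker S" using kerS xz(1) unfolding ker_def by auto
    hence "op_app S x = 0" unfolding ker_def by simp
    thus ?thesis using xz(2,3) orthS by simp
  qed
  have viii: "n0 \<in> orth (ran T)" if "n0 \<in> ker T" for n0
  proof -
    obtain x where x: "x \<in> D" "n0 - Tp x \<in> orth (ran T)" using proj_R by blast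
    have "n0 - Tp x \<in> ker T" using vii x(2) by blast
    hence "n0 - (n0 - Tp x) \<in> ker T" by (rule ker_diff[OF that])
    hence Tk: "Tp x \<in> ker T" by simp
    have S0: "0 \<in> op_dom S" "op_app S 0 = 0" using D_zero T_zero A_zero by auto
    have "op_app W (op_app S 0 + Tp x) = Tp 0" using W_eval[OF S0(1), of "Tp x"] Tk orthS by simp
    hence W0: "op_app W (Tp x) = 0" using S0(2) T_zero by simp
    obtain n where n: "n \<in> ker T" "x - n \<in> orth (ker T)" using proj_N by blast
    have "x - n = 0" using v[OF x(1) n] W0 by simp
    hence "x \<in> ker T" using n(1) by simp
    hence "Tp x = 0" unfolding ker_def by simp
    thus ?thesis using x(2) by simp
  qed
  have kerR: "ker T = orth (ran T)" using vii viii by blast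
  have symT: "cinner (Tp x) x' = cinner x (Tp x')" if "x \<in> D" "x' \<in> D" for x x'
  proof -
    obtain n where n: "n \<in> ker T" "x - n \<in> orth (ker T)" using proj_N by blast
    obtain n' where n': "n' \<in> ker T" "x' - n' \<in> orth (ker T)" using proj_N by blast
    have "cinner (op_app W (Tp x)) (Tp x') = cinner (Tp x) (op_app W (Tp x'))" by (rule sym)
    hence e: "cinner (x - n) (Tp x') = cinner (Tp x) (x' - n')" using v[OF that(1) n] v[OF that(2) n'] by simp
    have TR: "Tp x \<in> ran T" "Tp x' \<in> ran T" using that unfolding ran_def by auto
    have "cinner n (Tp x') = 0" using orthD'[OF _ TR(2)] n(1) kerR by simp
    moreover have "cinner (Tp x) n' = 0" using orthD[OF _ TR(1)] n'(1) kerR by simp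
    ultimately show ?thesis using e by (simp add: cinner_diff_left cinner_diff_right)
  qed
  have DsubA: "x' \<in> DA \<and> Ap x' = Tp x'" if "x' \<in> D" for x'
    using A_intro symT that by blast
  have AsubD: "y \<in> D" if "y \<in> DA" for y
  proof -
    have "Ap y \<in> ran S" using ranS that unfolding ran_def by auto
    moreover have "m \<in> ran T" if "m \<in> ran S" for m
    proof -
      obtain x where x: "x \<in> D" "m - Tp x \<in> orth (ran T)" using proj_R by blast
      have "m - Tp x \<in> orth (ran S)" using x(2) kerR orthS by simp
      hence 1: "cinner (m - Tp x) m = 0" using orthD'[OF _ that] by blast
      have 2: "cinner (m - Tp x) (Tp x) = 0" using orthD'[OF x(2)] x(1) unfolding ran_def by blast
      have "cinner (m - Tp x) (m - Tp x) = 0" using 1 2 by (simp add: cinner_diff_right)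
      hence "m = Tp x" using cinner_self_zero by fastforce
      thus ?thesis using x(1) unfolding ran_def by blast
    qed
    ultimately obtain x1 where x1: "x1 \<in> D" "Ap y = Tp x1" unfolding ran_def by blast
    have "y - x1 \<in> DA \<and> Ap (y - x1) = Ap y - Ap x1" using A_diff that DsubA x1(1) by blast
    hence "y - x1 \<in> ker A" using x1 DsubA unfolding ker_def by simp
    hence "y - x1 \<in> ker T" using orthR_kerA kerR by simp
    hence "y - x1 \<in> D" unfolding ker_def by simp
    hence "x1 + (y - x1) \<in> D" using D_add x1(1) by blast
    thus ?thesis by simp
  qed
  show ?thesis unfolding selfadjoint_def using dd DsubA AsubD by auto
qed

end

theorem theorem2p3:
  fixes T :: "'a::chilbert_space linop"
  assumes "lin_op T" and "densely_defined T" and "closed_op T" and "closed (ran T)"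
  shows "selfadjoint T \<longleftrightarrow> selfadjoint (cauchy_dual T)"
proof -
  interpret cop T using assms by unfold_locales
  show ?thesis using fwd bwd by blast
qed


end
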